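(* Let $R$ be a commutative ring with identity, $C=(c_{ij})_{i,j=1}^n$ a matrix with entries in $R$, and $E$ the $n\times n$ matrix all of whose entries are $1$. Then $$\det(E-C)=\det(-C)+\sum_{\vec G}(-1)^{\#(\text{cycles of }\vec G)}\prod_{ij\in E(\vec G)}c_{ij},$$ where the sum runs over all directed graphs $\vec G$ on the vertex set $\{1,\ldots,n\}$ in which one connected component is a directed path (possibly of length $0$, i.e. an isolated vertex) and all other connected components are directed cycles (possibly of length $1$, i.e. a loop $ii$).
   Context: In a directed graph, $ij\in E(\vec G)$ denotes a directed edge from $i$ to $j$ (a loop $ii$ contributes $c_{ii}$). Every vertex of $\{1,\ldots,n\}$ belongs to exactly one component of $\vec G$. *)

theory Defs
  imports "HOL-Analysis.Analysis"
begin

text \<open>A directed graph on the (finite) vertex type 'v is a set of directed edges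
  (pairs (i,j) meaning an edge from i to j; loops (i,i) allowed).\<close>

definition wconn :: "('v \<times> 'v) set \<Rightarrow> ('v \<times> 'v) set" where
  "wconn E = (E \<union> E\<inverse>)\<^sup>*"

definition components :: "('v \<times> 'v) set \<Rightarrow> 'v set set" where
  "components E = {wconn E `` {x} | x. True}"

definition is_dpath_comp :: "('v \<times> 'v) set \<Rightarrow> 'v set \<Rightarrow> bool" where
  "is_dpath_comp E S \<longleftrightarrow> (\<exists>vs. vs \<noteq> [] \<and> distinct vs \<and> set vs = S \<and>
     E \<inter> (S \<times> S) = {(vs ! i, vs ! (i+1)) | i. i + 1 < length vs})"

definition is_dcycle_comp :: "('v \<times> 'v) set \<Rightarrow> 'v set \<Rightarrow> bool" where
  "is_dcycle_comp E S \<longleftrightarrow> (\<exists>vs. vs \<noteq> [] \<and> distinct vs \<and> set vs = S \<and>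
     E \<inter> (S \<times> S) = {(vs ! i, vs ! ((i+1) mod length vs)) | i. i < length vs})"

definition path_cycle_graphs :: "('v::finite \<times> 'v) set set" where
  "path_cycle_graphs = {E. (\<exists>!S. S \<in> components E \<and> is_dpath_comp E S) \<and>
     (\<forall>S \<in> components E. is_dpath_comp E S \<or> is_dcycle_comp E S)}"

definition num_cycles :: "('v \<times> 'v) set \<Rightarrow> nat" where
  "num_cycles E = card {S \<in> components E. is_dcycle_comp E S}"

end

theory Submission
  imports Defs "HOL-Combinatorics.Cycles"
begin

definition orb :: "('a \<Rightarrow> 'a) \<Rightarrow> 'a \<Rightarrow> 'a set" where
  "orb p x = set (support p x)"

lemma orb_range: "permutation p \<Longrightarrow> orb p x = range (\<lambda>i. (p ^^ i) x)"
  unfolding orb_def by (rule support_set)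

lemma orb_self: "permutation p \<Longrightarrow> x \<in> orb p x"
  by (simp add: orb_range) (metis funpow_0 rangeI)

lemma orb_funpow: "permutation p \<Longrightarrow> (p ^^ i) x \<in> orb p x"
  by (simp add: orb_range)

lemma orb_step: "permutation p \<Longrightarrow> p x \<in> orb p x"
  using orb_funpow[of p 1 x] by simp

lemma orb_eq: assumes "permutation p" "y \<in> orb p x" shows "orb p y = orb p x"
proof -
  have "orb p y \<inter> orb p x \<noteq> {}" using assms orb_self[OF assms(1), of y] by blast
  then show ?thesis using disjoint_support[OF assms(1)] unfolding orb_def
    by (meson UNIV_I disjoint_def image_iff)
qed

lemma orb_p: "permutation p \<Longrightarrow> orb p (p x) = orb p x"
  by (simp add: orb_eq orb_step)

lemma orb_sub: assumes "p permutes S" "x \<in> S" "permutation p" shows "orb p x \<subseteq> S"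
proof -
  show ?thesis using permutes_in_image[OF permutes_funpow[OF assms(1)]] assms(2)
    by (auto simp: orb_range[OF assms(3)])
qed

lemma sign_cycle: "distinct cs \<Longrightarrow> cs \<noteq> [] \<Longrightarrow> sign (cycle_of_list cs) = (-1) ^ (length cs - 1)"
proof (induct cs rule: cycle_of_list.induct)
  case (1 i j cs)
  have "sign (cycle_of_list (i # j # cs)) = sign (Transposition.transpose i j) * sign (cycle_of_list (j # cs))"
    by (simp add: sign_compose permutation_swap_id permutation_of_cycle)
  also have "\<dots> = (-1) * (-1) ^ (length (j # cs) - 1)"
    using 1 by (simp add: sign_swap_id)
  finally have X: "sign (cycle_of_list (i # j # cs)) = (-1) * (-1) ^ (length (j # cs) - 1)" .
  show ?case by (simp only: X) simp
qed auto

lemma sign_orb: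
  assumes "finite S" "p permutes S"
  shows "sign p = (-1) ^ (card S - card (orb p ` S))"
  using assms
proof (induct "card S" arbitrary: S p rule: less_induct)
  case less
  show ?case
  proof (cases "S = {}")
    case True
    then have "p = id" using less(3) by (simp add: permutes_empty)
    then show ?thesis using True by simp
  next
    case False
    then obtain s where s: "s \<in> S" by blast
    have perm: "permutation p" using less(2,3) unfolding permutation_permutes by blast
    define cs where "cs = support p s"
    define S' where "S' = S - set cs"
    define q where "q = (\<lambda>y. if y \<in> S' then p y else y)"
    have decomp: "cycle_of_list cs \<circ> q = p"
    proof
      fix a
      consider "a \<in> S'" | "a \<in> set cs" | "a \<notin> S" "a \<notin> set cs"
        unfolding S'_def by blast
      thus "(cycle_of_list cs \<circ> q) a = p a"
      proof cases
        case 1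
        have "(p ^^ 1) a \<in> set (support p a)"
          unfolding support_set[OF perm] by blast
        with 1 have "p a \<notin> set cs"
          using disjoint_support'[OF perm, of a s] unfolding S'_def cs_def by auto
        with 1 show ?thesis
          using id_outside_supp[of _ cs] unfolding q_def by simp
      next
        case 2 thus ?thesis
          using cycle_restrict[OF perm] unfolding q_def S'_def cs_def by simp
      next
        case 3 thus ?thesis
          using id_outside_supp[OF 3(2)] less(3) permutes_not_in unfolding q_def S'_def by fastforce
      qed
    qed
    have qperm: "q permutes S'"
      using semidecomposition[OF less(3,2), of s] unfolding q_def S'_def cs_def .
    have csS: "set cs \<subseteq> S" using orb_sub[OF less(3) s perm] unfolding orb_def cs_def .
    have dist: "distinct cs" using cycle_of_permutation[OF perm] unfolding cs_def .
    have sin: "s \<in> set cs" using orb_self[OF perm, of s] unfolding orb_def cs_def .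
    have c1: "card S' = card S - card (set cs)"
      unfolding S'_def by (rule card_Diff_subset[OF finite_subset[OF csS less(2)] csS])
    have c2: "card (set cs) \<le> card S" by (rule card_mono[OF less(2) csS])
    have cardS: "card S = length cs + card S'"
      using c1 c2 distinct_card[OF dist] by simp
    have "card S' < card S" using cardS sin by (cases cs) auto
    then have IH: "sign q = (-1) ^ (card S' - card (orb q ` S'))"
      using less(1)[OF _ _ qperm] less(2) unfolding S'_def by blast
    have qpermut: "permutation q" using qperm less(2) unfolding permutation_permutes S'_def by blast
    have sp: "sign p = sign (cycle_of_list cs) * sign q"
      using decomp sign_compose[OF permutation_of_cycle qpermut] by metis
    have sc: "sign (cycle_of_list cs) = (-1) ^ (length cs - 1)"
    proof -
      have cne: "cs \<noteq> []" using sin by auto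
      show ?thesis using sign_cycle[OF dist cne] .
    qed
    have clos: "p y \<in> S'" if "y \<in> S'" for y
    proof -
      have "p y \<in> S" using that less(3) unfolding S'_def by (simp add: permutes_in_image)
      moreover have "p y \<notin> set cs"
      proof
        assume "p y \<in> set cs"
        then have "orb p (p y) = orb p s" using orb_eq[OF perm] unfolding orb_def cs_def by blast
        then have "y \<in> set cs" using orb_p[OF perm, of y] orb_self[OF perm, of y] unfolding orb_def cs_def by simp
        then show False using that unfolding S'_def by blast
      qed
      ultimately show ?thesis unfolding S'_def by blast
    qed
    have orbq: "orb q x = orb p x" if "x \<in> S'" for x
    proof -
      have "\<forall>i. (p ^^ i) x \<in> S' \<and> (q ^^ i) x = (p ^^ i) x"
      proof
        fix i show "(p ^^ i) x \<in> S' \<and> (q ^^ i) x = (p ^^ i) x"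
          by (induct i) (use that clos in \<open>auto simp: q_def\<close>)
      qed
      then have "(q ^^ i) x = (p ^^ i) x" for i by blast
      then have "least_power q x = least_power p x" unfolding least_power_def by simp
      then show ?thesis unfolding orb_def using \<open>\<And>i. (q ^^ i) x = (p ^^ i) x\<close> by simp
    qed
    have imq: "orb q ` S' = orb p ` S'" using orbq by (auto simp: image_def)
    have imp: "orb p ` S = insert (orb p s) (orb p ` S')"
    proof -
      have "orb p x = orb p s" if "x \<in> set cs" for x
        using orb_eq[OF perm] that unfolding orb_def cs_def by blast
      then show ?thesis using s unfolding S'_def by blast
    qed
    have notin: "orb p s \<notin> orb p ` S'"
    proof
      assume "orb p s \<in> orb p ` S'"
      then obtain x where "x \<in> S'" "orb p x = orb p s" by auto
      then show False using orb_self[OF perm, of x] unfolding S'_def orb_def cs_def by auto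
    qed
    have fin': "finite S'" using less(2) unfolding S'_def by simp
    have cardo: "card (orb p ` S) = Suc (card (orb p ` S'))"
      using imp notin fin' by simp
    have le: "card (orb p ` S') \<le> card S'" using card_image_le[OF fin'] .
    have L1: "length cs \<ge> 1" using sin by (cases cs) auto
    have "card S - card (orb p ` S) = (length cs - 1) + (card S' - card (orb p ` S'))"
      using cardS cardo le L1 by simp
    note eq = this
    have "sign p = (-1)^(length cs - 1) * (-1)^(card S' - card (orb p ` S'))"
      using sp sc IH imq by simp
    also have "\<dots> = (-1)^((length cs - 1) + (card S' - card (orb p ` S')))"
      by (simp add: power_add)
    finally show ?thesis using eq by simp
  qed
qed

definition Phi :: "'n \<Rightarrow> ('n \<Rightarrow> 'n) \<Rightarrow> ('n \<times> 'n) set" where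
  "Phi k \<sigma> = (\<lambda>i. (i, \<sigma> i)) ` (- {k})"

lemma finU: "finite (UNIV :: 'n::finite set)" by simp

lemma perm_univ: assumes "(\<sigma>::'n::finite \<Rightarrow> 'n) permutes UNIV" shows "permutation \<sigma>"
  unfolding permutation_permutes by (intro exI[of _ UNIV] conjI finU assms)

lemma nk_lemma:
  assumes perm: "permutation \<sigma>" and i: "Suc i < least_power \<sigma> (\<sigma> k)"
  shows "(\<sigma> ^^ i) (\<sigma> k) \<noteq> k"
proof
  assume h: "(\<sigma> ^^ i) (\<sigma> k) = k"
  have "(\<sigma> ^^ Suc i) (\<sigma> k) = \<sigma> k" using h by simp
  then have "least_power \<sigma> (\<sigma> k) \<le> Suc i" using least_power_le[where f=\<sigma> and n="Suc i" and x="\<sigma> k"] by simp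
  with i show False by simp
qed

lemma lastk_lemma:
  assumes perm: "permutation \<sigma>"
  shows "(\<sigma> ^^ (least_power \<sigma> (\<sigma> k) - 1)) (\<sigma> k) = k"
proof -
  let ?L = "least_power \<sigma> (\<sigma> k)"
  have Lpos: "0 < ?L" using least_power_of_permutation(2)[OF perm] .
  have "\<sigma> ((\<sigma> ^^ (?L - 1)) (\<sigma> k)) = (\<sigma> ^^ Suc (?L - 1)) (\<sigma> k)" by simp
  also have "\<dots> = (\<sigma> ^^ ?L) (\<sigma> k)" using Lpos by simp
  also have "\<dots> = \<sigma> k" using least_power_of_permutation(1)[OF perm] .
  finally show ?thesis
    using perm unfolding permutation by (meson bij_is_inj injD)
qed

lemma wconn_sym: "(x, y) \<in> wconn E \<Longrightarrow> (y, x) \<in> wconn E"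
proof -
  assume "(x, y) \<in> wconn E"
  then have "(y, x) \<in> ((E \<union> E\<inverse>)\<inverse>)\<^sup>*" unfolding wconn_def by (rule rtrancl_converseI)
  moreover have "(E \<union> E\<inverse>)\<inverse> = E \<union> E\<inverse>" by auto
  ultimately show ?thesis unfolding wconn_def by simp
qed

lemma wconn_Phi:
  assumes "\<sigma> permutes (UNIV::'n::finite set)"
  shows "wconn (Phi k \<sigma>) `` {x} = orb \<sigma> x"
proof -
  let ?E = "Phi k \<sigma>"
  have perm: "permutation \<sigma>" using perm_univ[OF assms] .
  have edge: "(z, \<sigma> z) \<in> ?E" if "z \<noteq> k" for z using that by (auto simp: Phi_def)
  define L where "L = least_power \<sigma> (\<sigma> k)"
  have Lpos: "0 < L" using least_power_of_permutation(2)[OF perm] unfolding L_def .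
  have reach: "(\<sigma> k, (\<sigma> ^^ i) (\<sigma> k)) \<in> ?E\<^sup>*" if "i < L" for i
    using that
  proof (induct i)
    case 0 show ?case by simp
  next
    case (Suc i)
    then have "(\<sigma> k, (\<sigma> ^^ i) (\<sigma> k)) \<in> ?E\<^sup>*" by simp
    moreover have "((\<sigma> ^^ i) (\<sigma> k), (\<sigma> ^^ Suc i) (\<sigma> k)) \<in> ?E"
      using edge[OF nk_lemma[OF perm, of i k]] Suc.prems unfolding L_def by simp
    ultimately show ?case by (rule rtrancl_into_rtrancl)
  qed
  have "(\<sigma> k, k) \<in> ?E\<^sup>*" using reach[of "L - 1"] Lpos lastk_lemma[OF perm, of k]
    unfolding L_def by simp
  then have "(\<sigma> k, k) \<in> wconn ?E"
    unfolding wconn_def by (meson in_mono rtrancl_mono sup_ge1)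
  then have kk: "(k, \<sigma> k) \<in> wconn ?E" by (rule wconn_sym)
  have step: "(z, \<sigma> z) \<in> wconn ?E" for z
  proof (cases "z = k")
    case True then show ?thesis using kk by simp
  next
    case False then show ?thesis using edge[OF False] unfolding wconn_def by auto
  qed
  have pw: "(x, (\<sigma> ^^ i) x) \<in> wconn ?E" for i
  proof (induct i)
    case 0 show ?case unfolding wconn_def by simp
  next
    case (Suc i)
    then show ?case using step[of "(\<sigma> ^^ i) x"] unfolding wconn_def
      by (simp add: rtrancl_trans)
  qed
  show ?thesis
  proof
    show "orb \<sigma> x \<subseteq> wconn ?E `` {x}" using pw by (auto simp: orb_range[OF perm])
  next
    show "wconn ?E `` {x} \<subseteq> orb \<sigma> x"
    proof
      fix y assume "y \<in> wconn ?E `` {x}"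
      then have "(x, y) \<in> (?E \<union> ?E\<inverse>)\<^sup>*" unfolding wconn_def by simp
      then show "y \<in> orb \<sigma> x"
      proof (induct rule: rtrancl_induct)
        case base show ?case using orb_self[OF perm] .
      next
        case (step y z)
        from step(2) show ?case
        proof
          assume "(y, z) \<in> ?E"
          then have "z = \<sigma> y" by (auto simp: Phi_def)
          then show ?thesis using orb_step[OF perm, of y] orb_eq[OF perm step(3)] by simp
        next
          assume "(y, z) \<in> ?E\<inverse>"
          then have "y = \<sigma> z" by (auto simp: Phi_def)
          then have "z \<in> orb \<sigma> y" using orb_p[OF perm, of z] orb_self[OF perm, of z] by simp
          then show ?thesis using orb_eq[OF perm step(3)] by simp
        qed
      qed
    qed
  qed
qed

lemma components_Phi:
  assumes "\<sigma> permutes (UNIV::'n::finite set)"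
  shows "components (Phi k \<sigma>) = range (orb \<sigma>)"
  unfolding components_def wconn_Phi[OF assms] by auto

lemma supp_nth: "i < least_power p x \<Longrightarrow> support p x ! i = (p ^^ i) x"
  by simp

lemma supp_next:
  assumes perm: "permutation p" and i: "i < length (support p x)"
  shows "p (support p x ! i) = support p x ! ((i + 1) mod length (support p x))"
proof -
  let ?L = "least_power p x"
  have iL: "i < ?L" using i by simp
  have p1: "p (support p x ! i) = (p ^^ Suc i) x" using iL by simp
  show ?thesis
  proof (cases "Suc i < ?L")
    case True then show ?thesis using iL by simp
  next
    case False
    then have si: "least_power p x = Suc i" using iL by simp
    have "p (support p x ! i) = (p ^^ Suc i) x" by (rule p1)
    also have "\<dots> = (p ^^ least_power p x) x" using si by simp
    also have "\<dots> = x" by (rule least_power_of_permutation(1)[OF perm])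
    also have "x = support p x ! ((i + 1) mod length (support p x))"
    proof -
      have m0: "(i + 1) mod length (support p x) = 0" using si by simp
      have s0: "support p x ! 0 = x" using iL by (simp del: upt_Suc)
      show ?thesis by (simp only: m0 s0)
    qed
    finally show ?thesis .
  qed
qed

lemma cyc_comp:
  assumes sp: "\<sigma> permutes (UNIV::'n::finite set)" and k: "k \<notin> orb \<sigma> x"
  shows "is_dcycle_comp (Phi k \<sigma>) (orb \<sigma> x)"
  unfolding is_dcycle_comp_def
proof (intro exI conjI)
  have perm: "permutation \<sigma>" using perm_univ[OF sp] .
  let ?vs = "support \<sigma> x"
  let ?O = "orb \<sigma> x"
  show "?vs \<noteq> []" using least_power_of_permutation(2)[OF perm, of x] by simp
  show "distinct ?vs" using cycle_of_permutation[OF perm] .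
  show "set ?vs = ?O" unfolding orb_def ..
  have clos: "\<sigma> z \<in> ?O" if "z \<in> ?O" for z
    using orb_step[OF perm, of z] orb_eq[OF perm that] by simp
  have A: "Phi k \<sigma> \<inter> ?O \<times> ?O = {(z, \<sigma> z) | z. z \<in> ?O}"
    using clos k by (auto simp: Phi_def)
  have pw: "\<And>i. i < length ?vs \<Longrightarrow> \<sigma> (?vs ! i) = ?vs ! ((i + 1) mod length ?vs)"
    using supp_next[OF perm] .
  have setvs: "set ?vs = ?O" unfolding orb_def ..
  have B: "{(z, \<sigma> z) | z. z \<in> ?O} =
        {(?vs ! i, ?vs ! ((i + 1) mod length ?vs)) | i. i < length ?vs}"
  proof
    show "{(z, \<sigma> z) | z. z \<in> ?O} \<subseteq> {(?vs ! i, ?vs ! ((i + 1) mod length ?vs)) | i. i < length ?vs}"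
    proof
      fix e assume "e \<in> {(z, \<sigma> z) | z. z \<in> ?O}"
      then obtain z where z: "e = (z, \<sigma> z)" "z \<in> ?O" by blast
      have zin: "z \<in> set ?vs" using setvs z(2) by blast
      obtain i where i: "i < length ?vs" "?vs ! i = z" using zin by (metis in_set_conv_nth)
      have "e = (?vs ! i, ?vs ! ((i + 1) mod length ?vs))" using z(1) i pw[OF i(1)] by simp
      then show "e \<in> {(?vs ! i, ?vs ! ((i + 1) mod length ?vs)) | i. i < length ?vs}" using i(1) by blast
    qed
  next
    show "{(?vs ! i, ?vs ! ((i + 1) mod length ?vs)) | i. i < length ?vs} \<subseteq> {(z, \<sigma> z) | z. z \<in> ?O}"
    proof
      fix e assume "e \<in> {(?vs ! i, ?vs ! ((i + 1) mod length ?vs)) | i. i < length ?vs}"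
      then obtain i where i: "e = (?vs ! i, ?vs ! ((i + 1) mod length ?vs))" "i < length ?vs" by blast
      have z: "?vs ! i \<in> ?O" unfolding setvs[symmetric] by (rule nth_mem[OF i(2)])
      have "e = (?vs ! i, \<sigma> (?vs ! i))" using i pw[OF i(2)] by simp
      then show "e \<in> {(z, \<sigma> z) | z. z \<in> ?O}" using z by blast
    qed
  qed
  show "Phi k \<sigma> \<inter> ?O \<times> ?O = {(?vs ! i, ?vs ! ((i + 1) mod length ?vs)) | i. i < length ?vs}"
    using A B by simp
qed

lemma path_comp:
  assumes sp: "\<sigma> permutes (UNIV::'n::finite set)"
  shows "is_dpath_comp (Phi k \<sigma>) (orb \<sigma> k)"
  unfolding is_dpath_comp_def
proof (intro exI conjI)
  have perm: "permutation \<sigma>" using perm_univ[OF sp] .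
  let ?vs = "support \<sigma> (\<sigma> k)"
  let ?L = "least_power \<sigma> (\<sigma> k)"
  let ?O = "orb \<sigma> k"
  have Lpos: "0 < ?L" using least_power_of_permutation(2)[OF perm] .
  show "?vs \<noteq> []" using Lpos by simp
  show "distinct ?vs" using cycle_of_permutation[OF perm] .
  have setvs: "set ?vs = ?O" using orb_p[OF perm, of k] unfolding orb_def .
  show "set ?vs = ?O" by (rule setvs)
  have clos: "\<sigma> z \<in> ?O" if "z \<in> ?O" for z
    using orb_step[OF perm, of z] orb_eq[OF perm that] by simp
  have A: "Phi k \<sigma> \<inter> ?O \<times> ?O = {(z, \<sigma> z) | z. z \<in> ?O \<and> z \<noteq> k}"
    using clos by (auto simp: Phi_def)
  have B: "{(z, \<sigma> z) | z. z \<in> ?O \<and> z \<noteq> k} = {(?vs ! i, ?vs ! (i + 1)) | i. i + 1 < length ?vs}"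
  proof
    show "{(z, \<sigma> z) | z. z \<in> ?O \<and> z \<noteq> k} \<subseteq> {(?vs ! i, ?vs ! (i + 1)) | i. i + 1 < length ?vs}"
    proof
      fix e assume "e \<in> {(z, \<sigma> z) | z. z \<in> ?O \<and> z \<noteq> k}"
      then obtain z where e: "e = (z, \<sigma> z)" "z \<in> ?O" "z \<noteq> k" by blast
      have zin: "z \<in> set ?vs" using setvs e(2) by blast
      obtain i where i0: "i < length ?vs" "?vs ! i = z" using zin by (metis in_set_conv_nth)
      then have i: "i < ?L" "z = (\<sigma> ^^ i) (\<sigma> k)" by auto
      have "i \<noteq> ?L - 1" using i e(3) lastk_lemma[OF perm, of k] by auto
      then have i1: "i + 1 < ?L" using i by simp
      have "\<sigma> z = (\<sigma> ^^ Suc i) (\<sigma> k)" using i by simp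
      then have "e = (?vs ! i, ?vs ! (i + 1))" using e i i1 by simp
      moreover have "i + 1 < length ?vs" using i1 by simp
      ultimately show "e \<in> {(?vs ! i, ?vs ! (i + 1)) | i. i + 1 < length ?vs}" by blast
    qed
  next
    show "{(?vs ! i, ?vs ! (i + 1)) | i. i + 1 < length ?vs} \<subseteq> {(z, \<sigma> z) | z. z \<in> ?O \<and> z \<noteq> k}"
    proof
      fix e assume "e \<in> {(?vs ! i, ?vs ! (i + 1)) | i. i + 1 < length ?vs}"
      then obtain i where i: "e = (?vs ! i, ?vs ! (i + 1))" "i + 1 < ?L" by auto
      have il: "i < length ?vs" using i(2) by simp
      have z: "?vs ! i \<in> ?O" unfolding setvs[symmetric] by (rule nth_mem[OF il])
      have nk: "?vs ! i \<noteq> k" using nk_lemma[OF perm, of i k] i(2) by simp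
      have "?vs ! (i + 1) = \<sigma> (?vs ! i)" using i(2) by simp
      then show "e \<in> {(z, \<sigma> z) | z. z \<in> ?O \<and> z \<noteq> k}" using i z nk by auto
    qed
  qed
  show "Phi k \<sigma> \<inter> ?O \<times> ?O = {(?vs ! i, ?vs ! (i + 1)) | i. i + 1 < length ?vs}"
    using A B by simp
qed

lemma path_card:
  assumes "is_dpath_comp E S" shows "card (E \<inter> S \<times> S) + 1 = card S"
proof -
  obtain vs where vs: "vs \<noteq> []" "distinct vs" "set vs = S"
    "E \<inter> (S \<times> S) = {(vs ! i, vs ! (i+1)) | i. i + 1 < length vs}"
    using assms unfolding is_dpath_comp_def by blast
  have e: "E \<inter> (S \<times> S) = (\<lambda>i. (vs ! i, vs ! (i+1))) ` {..<length vs - 1}"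
    using vs(4) by (auto simp: less_diff_conv)
  have "inj_on (\<lambda>i. (vs ! i, vs ! (i+1))) {..<length vs - 1}"
    using vs(2) by (auto simp: inj_on_def nth_eq_iff_index_eq)
  then have "card (E \<inter> S \<times> S) = length vs - 1" using e card_image by fastforce
  moreover have "card S = length vs" using vs distinct_card by blast
  ultimately show ?thesis using vs(1) by (cases vs) auto
qed

lemma cyc_card:
  assumes "is_dcycle_comp E S" shows "card (E \<inter> S \<times> S) = card S"
proof -
  obtain vs where vs: "vs \<noteq> []" "distinct vs" "set vs = S"
    "E \<inter> (S \<times> S) = {(vs ! i, vs ! ((i+1) mod length vs)) | i. i < length vs}"
    using assms unfolding is_dcycle_comp_def by blast
  have e: "E \<inter> (S \<times> S) = (\<lambda>i. (vs ! i, vs ! ((i+1) mod length vs))) ` {..<length vs}"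
    using vs(4) by auto
  have "inj_on (\<lambda>i. (vs ! i, vs ! ((i+1) mod length vs))) {..<length vs}"
    using vs(2) by (auto simp: inj_on_def nth_eq_iff_index_eq)
  then have "card (E \<inter> S \<times> S) = length vs" using e card_image by fastforce
  moreover have "card S = length vs" using vs distinct_card by blast
  ultimately show ?thesis by simp
qed

lemma not_both: "is_dpath_comp E S \<Longrightarrow> is_dcycle_comp E S \<Longrightarrow> False"
  using path_card cyc_card by fastforce

lemma Phi_in:
  assumes sp: "\<sigma> permutes (UNIV::'n::finite set)"
  shows "Phi k \<sigma> \<in> path_cycle_graphs" and "num_cycles (Phi k \<sigma>) + 1 = card (range (orb \<sigma>))"
proof -
  have perm: "permutation \<sigma>" using perm_univ[OF sp] .
  let ?E = "Phi k \<sigma>"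
  have comps: "components ?E = range (orb \<sigma>)" by (rule components_Phi[OF sp])
  have other: "is_dcycle_comp ?E (orb \<sigma> x)" if "orb \<sigma> x \<noteq> orb \<sigma> k" for x
  proof -
    have "k \<notin> orb \<sigma> x" using that orb_eq[OF perm] by metis
    then show ?thesis by (rule cyc_comp[OF sp])
  qed
  have pc: "is_dpath_comp ?E (orb \<sigma> k)" by (rule path_comp[OF sp])
  have ex: "\<exists>!S. S \<in> components ?E \<and> is_dpath_comp ?E S"
  proof (rule ex1I[of _ "orb \<sigma> k"])
    show "orb \<sigma> k \<in> components ?E \<and> is_dpath_comp ?E (orb \<sigma> k)" using comps pc by simp
  next
    fix S assume h: "S \<in> components ?E \<and> is_dpath_comp ?E S"
    then obtain x where x: "S = orb \<sigma> x" using comps by auto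
    show "S = orb \<sigma> k"
    proof (rule ccontr)
      assume "S \<noteq> orb \<sigma> k"
      then have "orb \<sigma> x \<noteq> orb \<sigma> k" using x by simp
      then have "is_dcycle_comp ?E (orb \<sigma> x)" by (rule other)
      then have "is_dcycle_comp ?E S" using x by simp
      then show False using not_both[of ?E S] h by blast
    qed
  qed
  have all: "\<forall>S \<in> components ?E. is_dpath_comp ?E S \<or> is_dcycle_comp ?E S"
  proof
    fix S assume "S \<in> components ?E"
    then obtain x where x: "S = orb \<sigma> x" using comps by auto
    show "is_dpath_comp ?E S \<or> is_dcycle_comp ?E S"
    proof (cases "S = orb \<sigma> k")
      case True then show ?thesis using pc by simp
    next
      case False
      then have "orb \<sigma> x \<noteq> orb \<sigma> k" using x by simp
      then have "is_dcycle_comp ?E (orb \<sigma> x)" by (rule other)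
      then show ?thesis using x by simp
    qed
  qed
  show "?E \<in> path_cycle_graphs"
    unfolding path_cycle_graphs_def mem_Collect_eq using ex all by (rule conjI)
  have "{S \<in> components ?E. is_dcycle_comp ?E S} = range (orb \<sigma>) - {orb \<sigma> k}"
  proof
    show "{S \<in> components ?E. is_dcycle_comp ?E S} \<subseteq> range (orb \<sigma>) - {orb \<sigma> k}"
    proof
      fix S assume "S \<in> {S \<in> components ?E. is_dcycle_comp ?E S}"
      then have S: "S \<in> range (orb \<sigma>)" "is_dcycle_comp ?E S" using comps by auto
      have "S \<noteq> orb \<sigma> k"
      proof
        assume "S = orb \<sigma> k"
        then show False using not_both[of ?E S] S(2) pc by blast
      qed
      then show "S \<in> range (orb \<sigma>) - {orb \<sigma> k}" using S(1) by simp
    qed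
  next
    show "range (orb \<sigma>) - {orb \<sigma> k} \<subseteq> {S \<in> components ?E. is_dcycle_comp ?E S}"
    proof
      fix S assume "S \<in> range (orb \<sigma>) - {orb \<sigma> k}"
      then obtain x where x: "S = orb \<sigma> x" "orb \<sigma> x \<noteq> orb \<sigma> k" by auto
      then show "S \<in> {S \<in> components ?E. is_dcycle_comp ?E S}" using other[OF x(2)] comps by simp
    qed
  qed
  then have "num_cycles ?E = card (range (orb \<sigma>)) - 1"
    unfolding num_cycles_def by (simp add: card_Diff_singleton)
  moreover have "card (range (orb \<sigma>)) \<ge> 1"
  proof -
    have "finite (range (orb \<sigma>))" by simp
    moreover have "range (orb \<sigma>) \<noteq> {}" by simp
    ultimately show ?thesis by (simp add: Suc_le_eq card_gt_0_iff)
  qed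
  ultimately show "num_cycles ?E + 1 = card (range (orb \<sigma>))" by simp
qed

lemma Phi_inj:
  assumes sp: "\<sigma> permutes (UNIV::'n::finite set)" and sp': "\<sigma>' permutes (UNIV::'n set)"
    and eq: "Phi k \<sigma> = Phi k' \<sigma>'"
  shows "k = k' \<and> \<sigma> = \<sigma>'"
proof -
  have f: "fst ` Phi k \<sigma> = - {k}" for k and \<sigma> :: "'n \<Rightarrow> 'n"
    unfolding Phi_def by (simp add: image_image)
  have "- {k} = - {k'}" using f[of k \<sigma>] f[of k' \<sigma>'] eq by simp
  then have kk: "k = k'" by blast
  have agree: "\<sigma> i = \<sigma>' i" if "i \<noteq> k" for i
  proof -
    have "(i, \<sigma> i) \<in> Phi k' \<sigma>'" using eq that unfolding Phi_def by auto
    then show ?thesis unfolding Phi_def by auto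
  qed
  have "\<sigma> k = \<sigma>' k"
  proof (rule ccontr)
    assume ne: "\<sigma> k \<noteq> \<sigma>' k"
    obtain j where j: "\<sigma> j = \<sigma>' k" using sp unfolding permutes_univ by blast
    have "j \<noteq> k" using j ne by auto
    then have "\<sigma>' j = \<sigma>' k" using agree j by simp
    then have "j = k" using sp' unfolding permutes_univ by blast
    with \<open>j \<noteq> k\<close> show False by simp
  qed
  then have "\<sigma> = \<sigma>'" using agree by (intro ext) (case_tac "x = k", auto)
  then show ?thesis using kk by simp
qed

definition nxt :: "'a list \<Rightarrow> 'a \<Rightarrow> 'a" where
  "nxt vs x = vs ! (((THE i. i < length vs \<and> vs ! i = x) + 1) mod length vs)"

lemma nxt_nth:
  assumes "distinct vs" "i < length vs"
  shows "nxt vs (vs ! i) = vs ! ((i + 1) mod length vs)"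
proof -
  have "(THE j. j < length vs \<and> vs ! j = vs ! i) = i"
    using assms by (auto simp: nth_eq_iff_index_eq)
  then show ?thesis unfolding nxt_def by simp
qed

lemma mod_suc: assumes "i < n" shows "(i + 1) mod (n::nat) = (if i + 1 = n then 0 else i + 1)"
proof (cases "i + 1 = n")
  case True then show ?thesis by simp
next
  case False then have "i + 1 < n" using assms by simp
  then show ?thesis using False by simp
qed

lemma mod_suc_inj: "i < n \<Longrightarrow> j < n \<Longrightarrow> (i + 1) mod (n::nat) = (j + 1) mod n \<Longrightarrow> i = j"
  using mod_suc[of i n] mod_suc[of j n] by (auto split: if_splits)

lemma wconn_refl: "x \<in> wconn E `` {x}"
  unfolding wconn_def by simp

lemma wconn_same: assumes "y \<in> wconn E `` {x}" shows "wconn E `` {y} = wconn E `` {x}"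
proof -
  have xy: "(x, y) \<in> wconn E" using assms by simp
  have yx: "(y, x) \<in> wconn E" using wconn_sym[OF xy] .
  show ?thesis
  proof
    show "wconn E `` {y} \<subseteq> wconn E `` {x}"
    proof
      fix z assume "z \<in> wconn E `` {y}"
      then have "(y, z) \<in> wconn E" by simp
      then have "(x, z) \<in> wconn E" using xy unfolding wconn_def by (metis rtrancl_trans)
      then show "z \<in> wconn E `` {x}" by simp
    qed
    show "wconn E `` {x} \<subseteq> wconn E `` {y}"
    proof
      fix z assume "z \<in> wconn E `` {x}"
      then have "(x, z) \<in> wconn E" by simp
      then have "(y, z) \<in> wconn E" using yx unfolding wconn_def by (metis rtrancl_trans)
      then show "z \<in> wconn E `` {y}" by simp
    qed
  qed
qed

lemma wconn_edge: "(a, b) \<in> E \<Longrightarrow> b \<in> wconn E `` {a}"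
  unfolding wconn_def by auto

lemma Phi_surj:
  assumes G: "G \<in> (path_cycle_graphs :: ('n::finite \<times> 'n) set set)"
  shows "\<exists>k \<sigma>. \<sigma> permutes UNIV \<and> G = Phi k \<sigma>"
proof -
  define comp where "comp x = wconn G `` {x}" for x
  have compC: "comp x \<in> components G" for x unfolding comp_def components_def by blast
  have inC: "comp x = S" if SC: "S \<in> components G" and xS: "x \<in> S" for S x
  proof -
    obtain y where y: "S = wconn G `` {y}" using SC unfolding components_def by blast
    then have xw: "x \<in> wconn G `` {y}" using xS by simp
    show ?thesis unfolding comp_def using wconn_same[OF xw] y by simp
  qed
  have xin: "x \<in> comp x" for x unfolding comp_def by (rule wconn_refl)
  have ex: "\<exists>!S. S \<in> components G \<and> is_dpath_comp G S"
    using G unfolding path_cycle_graphs_def by simp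
  obtain p0 where p0c: "p0 \<in> components G \<and> is_dpath_comp G p0"
    and u: "\<forall>y. y \<in> components G \<and> is_dpath_comp G y \<longrightarrow> y = p0"
    using ex by (rule ex1E)
  have p0: "p0 \<in> components G" "is_dpath_comp G p0" using p0c by simp_all
  have uniq: "S = p0" if "S \<in> components G" "is_dpath_comp G S" for S
    using u that by simp
  have allc: "is_dcycle_comp G S" if SC: "S \<in> components G" and ne: "S \<noteq> p0" for S
  proof -
    have "\<forall>S\<in>components G. is_dpath_comp G S \<or> is_dcycle_comp G S"
      using G unfolding path_cycle_graphs_def by simp
    then have "is_dpath_comp G S \<or> is_dcycle_comp G S" using SC by simp
    moreover have "\<not> is_dpath_comp G S" using uniq[OF SC] ne by auto
    ultimately show ?thesis by simp
  qed
  define good where "good S vs \<longleftrightarrow> vs \<noteq> [] \<and> distinct vs \<and> set vs = S \<and>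
     G \<inter> S \<times> S = (if S = p0 then {(vs ! i, vs ! (i+1)) | i. i + 1 < length vs}
                    else {(vs ! i, vs ! ((i+1) mod length vs)) | i. i < length vs})" for S vs
  have exg: "\<exists>vs. good S vs" if "S \<in> components G" for S
  proof (cases "S = p0")
    case True then show ?thesis using p0(2) unfolding is_dpath_comp_def good_def by auto
  next
    case False then show ?thesis using allc[OF that False] unfolding is_dcycle_comp_def good_def by auto
  qed
  define lst where "lst S = (SOME vs. good S vs)" for S
  have gl: "good S (lst S)" if "S \<in> components G" for S
    unfolding lst_def using exg[OF that] by (rule someI_ex)
  define \<sigma> where "\<sigma> x = nxt (lst (comp x)) x" for x
  define k where "k = last (lst p0)"
  have sig: "\<exists>i < length (lst (comp x)). lst (comp x) ! i = x \<and>
      \<sigma> x = lst (comp x) ! ((i + 1) mod length (lst (comp x)))" for x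
  proof -
    have g: "good (comp x) (lst (comp x))" using gl[OF compC] .
    then have "x \<in> set (lst (comp x))" using xin unfolding good_def by simp
    then obtain i where i: "i < length (lst (comp x))" "lst (comp x) ! i = x"
      by (metis in_set_conv_nth)
    have d: "distinct (lst (comp x))" using g unfolding good_def by simp
    have "\<sigma> x = nxt (lst (comp x)) (lst (comp x) ! i)" unfolding \<sigma>_def using i(2) by simp
    also have "\<dots> = lst (comp x) ! ((i + 1) mod length (lst (comp x)))" by (rule nxt_nth[OF d i(1)])
    finally have "\<sigma> x = lst (comp x) ! ((i + 1) mod length (lst (comp x)))" .
    then show ?thesis using i by blast
  qed
  have scomp: "\<sigma> x \<in> comp x" for x
  proof -
    obtain i where i: "i < length (lst (comp x))"
      "\<sigma> x = lst (comp x) ! ((i + 1) mod length (lst (comp x)))" using sig[of x] by blast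
    have g: "good (comp x) (lst (comp x))" using gl[OF compC] .
    have lp: "0 < length (lst (comp x))" using i(1) by linarith
    have "(i + 1) mod length (lst (comp x)) < length (lst (comp x))" by (rule mod_less_divisor[OF lp])
    then have "\<sigma> x \<in> set (lst (comp x))" using i(2) by simp
    then show ?thesis using g unfolding good_def by simp
  qed
  have inj: "inj \<sigma>"
  proof
    fix x y assume e: "\<sigma> x = \<sigma> y"
    have "comp x = comp (\<sigma> x)" using inC[OF compC scomp] by simp
    moreover have "comp y = comp (\<sigma> y)" using inC[OF compC scomp] by simp
    ultimately have cxy: "comp x = comp y" using e by simp
    obtain i where i: "i < length (lst (comp x))" "lst (comp x) ! i = x"
      "\<sigma> x = lst (comp x) ! ((i + 1) mod length (lst (comp x)))" using sig[of x] by blast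
    obtain j where j: "j < length (lst (comp x))" "lst (comp x) ! j = y"
      "\<sigma> y = lst (comp x) ! ((j + 1) mod length (lst (comp x)))" using sig[of y] cxy by auto
    have d: "distinct (lst (comp x))" using gl[OF compC] unfolding good_def by simp
    have lp: "0 < length (lst (comp x))" using i(1) by linarith
    have mi: "(i + 1) mod length (lst (comp x)) < length (lst (comp x))" by (rule mod_less_divisor[OF lp])
    have mj: "(j + 1) mod length (lst (comp x)) < length (lst (comp x))" by (rule mod_less_divisor[OF lp])
    have "lst (comp x) ! ((i + 1) mod length (lst (comp x))) = lst (comp x) ! ((j + 1) mod length (lst (comp x)))"
      using e i(3) j(3) by simp
    then have "(i + 1) mod length (lst (comp x)) = (j + 1) mod length (lst (comp x))"
      using nth_eq_iff_index_eq[OF d mi mj] by simp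
    then have "i = j" using mod_suc_inj i(1) j(1) by blast
    then show "x = y" using i j by simp
  qed
  have surj: "surj \<sigma>" using finite_UNIV_inj_surj[OF finU inj] .
  have ex1: "\<exists>!x. \<sigma> x = y" for y
  proof -
    obtain x where x: "y = \<sigma> x" using surjD[OF surj] by blast
    show ?thesis
    proof (rule ex1I[of _ x])
      show "\<sigma> x = y" using x by simp
    next
      fix z assume "\<sigma> z = y"
      then show "z = x" using x inj by (simp add: inj_eq)
    qed
  qed
  have sp: "\<sigma> permutes UNIV" unfolding permutes_univ using ex1 by simp
  let ?v = "lst p0"
  have g0: "good p0 ?v" using gl[OF p0(1)] .
  have kv: "k = ?v ! (length ?v - 1)" "length ?v - 1 < length ?v"
    using g0 unfolding k_def good_def by (auto simp: last_conv_nth)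
  have kp0: "k \<in> p0" using g0 kv unfolding good_def by (metis nth_mem)
  have ck: "comp k = p0" using inC[OF p0(1) kp0] .
  have "G = Phi k \<sigma>"
  proof
    show "G \<subseteq> Phi k \<sigma>"
    proof
      fix e assume eG: "e \<in> G"
      then obtain a b where e: "e = (a, b)" by (cases e)
      let ?S = "comp a"
      let ?vs = "lst ?S"
      have g: "good ?S ?vs" using gl[OF compC] .
      have bS: "b \<in> ?S" using wconn_edge[of a b G] eG e unfolding comp_def by simp
      have abS: "(a, b) \<in> G \<inter> ?S \<times> ?S" using eG e bS xin by simp
      have "b = \<sigma> a \<and> a \<noteq> k"
      proof (cases "?S = p0")
        case True
        have eqn: "G \<inter> ?S \<times> ?S = {(?vs ! i, ?vs ! (i+1)) | i. i + 1 < length ?vs}"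
          using g True unfolding good_def by simp
        have "(a, b) \<in> {(?vs ! i, ?vs ! (i+1)) | i. i + 1 < length ?vs}"
          unfolding eqn[symmetric] by (rule abS)
        then obtain i where i: "i + 1 < length ?vs" "(a, b) = (?vs ! i, ?vs ! (i + 1))"
          by blast
        have d: "distinct ?vs" using g unfolding good_def by simp
        have "\<sigma> a = ?vs ! ((i + 1) mod length ?vs)"
          using nxt_nth[OF d, of i] i unfolding \<sigma>_def by simp
        then have "\<sigma> a = b" using i by simp
        moreover have "a \<noteq> k"
        proof
          assume "a = k"
          then have "?vs ! i = ?vs ! (length ?vs - 1)" using kv i True by simp
          then have "i = length ?vs - 1" using d i(1) by (simp add: nth_eq_iff_index_eq)
          then show False using i(1) by simp
        qed
        ultimately show ?thesis by simp
      next
        case False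
        have eqn: "G \<inter> ?S \<times> ?S = {(?vs ! i, ?vs ! ((i+1) mod length ?vs)) | i. i < length ?vs}"
          using g False unfolding good_def by simp
        have "(a, b) \<in> {(?vs ! i, ?vs ! ((i+1) mod length ?vs)) | i. i < length ?vs}"
          unfolding eqn[symmetric] by (rule abS)
        then obtain i where i: "i < length ?vs" "(a, b) = (?vs ! i, ?vs ! ((i + 1) mod length ?vs))"
          by blast
        have d: "distinct ?vs" using g unfolding good_def by simp
        have "\<sigma> a = b" using nxt_nth[OF d i(1)] i unfolding \<sigma>_def by simp
        moreover have "a \<noteq> k" using False ck by auto
        ultimately show ?thesis by simp
      qed
      then show "e \<in> Phi k \<sigma>" using e unfolding Phi_def by auto
    qed
  next
    show "Phi k \<sigma> \<subseteq> G"
    proof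
      fix e assume "e \<in> Phi k \<sigma>"
      then obtain a where a: "e = (a, \<sigma> a)" "a \<noteq> k" unfolding Phi_def by auto
      let ?S = "comp a"
      let ?vs = "lst ?S"
      have g: "good ?S ?vs" using gl[OF compC] .
      have d: "distinct ?vs" using g unfolding good_def by simp
      have "a \<in> set ?vs" using g xin unfolding good_def by simp
      then obtain j where j: "j < length ?vs" "?vs ! j = a" by (metis in_set_conv_nth)
      have sa: "\<sigma> a = ?vs ! ((j + 1) mod length ?vs)" using nxt_nth[OF d j(1)] j unfolding \<sigma>_def by simp
      show "e \<in> G"
      proof (cases "?S = p0")
        case True
        have "j \<noteq> length ?vs - 1" using kv j a(2) True by auto
        then have j1: "j + 1 < length ?vs" using j(1) by simp
        then have "\<sigma> a = ?vs ! (j + 1)" using sa by simp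
        then have "e = (?vs ! j, ?vs ! (j+1))" using a(1) j(2) by simp
        then have "e \<in> {(?vs ! i, ?vs ! (i+1)) | i. i + 1 < length ?vs}" using j1 by blast
        moreover have "G \<inter> ?S \<times> ?S = {(?vs ! i, ?vs ! (i+1)) | i. i + 1 < length ?vs}"
          using g True unfolding good_def by simp
        ultimately show ?thesis by blast
      next
        case False
        have "e = (?vs ! j, ?vs ! ((j+1) mod length ?vs))" using a(1) j(2) sa by simp
        then have "e \<in> {(?vs ! i, ?vs ! ((i+1) mod length ?vs)) | i. i < length ?vs}" using j(1) by blast
        moreover have "G \<inter> ?S \<times> ?S = {(?vs ! i, ?vs ! ((i+1) mod length ?vs)) | i. i < length ?vs}"
          using g False unfolding good_def by simp
        ultimately show ?thesis by blast
      qed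
    qed
  qed
  then show ?thesis using sp by blast
qed

lemma det_cong: "(\<And>i. f i = g i) \<Longrightarrow> det (\<chi> i. f i) = det ((\<chi> i. g i) :: 'a::comm_ring_1^'n::finite^'n)"
  by (metis ext)

lemma det_multi:
  fixes u :: "'a::comm_ring_1^'n::finite" and v w :: "'n \<Rightarrow> 'a^'n"
  assumes "finite T"
  shows "det (\<chi> i. if i \<in> T then u + v i else w i) =
    det (\<chi> i. if i \<in> T then v i else w i) +
    (\<Sum>k\<in>T. det (\<chi> i. if i = k then u else if i \<in> T then v i else w i))"
  using assms
proof (induct T arbitrary: w rule: finite_induct)
  case empty show ?case by simp
next
  case (insert a T w)
  define w1 where "w1 = w(a := u)"
  define w2 where "w2 = w(a := v a)"
  have "det (\<chi> i. if i \<in> insert a T then u + v i else w i) =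
        det (\<chi> i. if i = a then (\<lambda>_. u) i + v i else (if i \<in> T then u + v i else w i))"
    by (rule det_cong) simp
  also have "\<dots> = det (\<chi> i. if i = a then u else (if i \<in> T then u + v i else w i)) +
                  det (\<chi> i. if i = a then v i else (if i \<in> T then u + v i else w i))"
    by (rule det_row_add)
  also have "det (\<chi> i. if i = a then u else (if i \<in> T then u + v i else w i)) =
             det (\<chi> i. if i \<in> T then u + v i else w1 i)"
    by (rule det_cong) (use insert(2) in \<open>auto simp: w1_def\<close>)
  also have "\<dots> = det (\<chi> i. if i \<in> T then v i else w1 i) +
      (\<Sum>k\<in>T. det (\<chi> i. if i = k then u else if i \<in> T then v i else w1 i))"
    by (rule insert(3))
  also have "(\<Sum>k\<in>T. det (\<chi> i. if i = k then u else if i \<in> T then v i else w1 i)) = 0"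
  proof (rule sum.neutral, rule ballI)
    fix k assume k: "k \<in> T"
    have "k \<noteq> a" using k insert(2) by auto
    then show "det (\<chi> i. if i = k then u else if i \<in> T then v i else w1 i) = 0"
      by (rule det_identical_rows[where i=k and j=a]) (use insert(2) in \<open>simp add: row_def w1_def\<close>)
  qed
  also have "det (\<chi> i. if i = a then v i else (if i \<in> T then u + v i else w i)) =
             det (\<chi> i. if i \<in> T then u + v i else w2 i)"
    by (rule det_cong) (use insert(2) in \<open>auto simp: w2_def\<close>)
  also have "\<dots> = det (\<chi> i. if i \<in> T then v i else w2 i) +
      (\<Sum>k\<in>T. det (\<chi> i. if i = k then u else if i \<in> T then v i else w2 i))"
    by (rule insert(3))
  also have "det (\<chi> i. if i \<in> T then v i else w2 i) = det (\<chi> i. if i \<in> insert a T then v i else w i)"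
    by (rule det_cong) (auto simp: w2_def)
  also have "(\<Sum>k\<in>T. det (\<chi> i. if i = k then u else if i \<in> T then v i else w2 i)) =
      (\<Sum>k\<in>T. det (\<chi> i. if i = k then u else if i \<in> insert a T then v i else w i))"
    by (rule sum.cong[OF refl], rule det_cong) (auto simp: w2_def)
  also have "det (\<chi> i. if i \<in> T then v i else w1 i) =
      det (\<chi> i. if i = a then u else if i \<in> insert a T then v i else w i)"
    by (rule det_cong) (use insert(2) in \<open>auto simp: w1_def\<close>)
  finally show ?case using insert(1,2) by (simp add: add_ac)
qed

lemma det_rank1:
  fixes u :: "'a::comm_ring_1^'n::finite" and v :: "'n \<Rightarrow> 'a^'n"
  shows "det (\<chi> i. u + v i) = det (\<chi> i. v i) + (\<Sum>k\<in>UNIV. det (\<chi> i. if i = k then u else v i))"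
proof -
  have a: "det (\<chi> i. u + v i) = det (\<chi> i. if i \<in> UNIV then u + v i else v i)"
    by (rule det_cong) simp
  have b: "det (\<chi> i. v i) = det (\<chi> i. if i \<in> UNIV then v i else v i)"
    by (rule det_cong) simp
  have c: "\<And>k. det (\<chi> i. if i = k then u else v i) =
      det (\<chi> i. if i = k then u else if i \<in> UNIV then v i else v i)"
    by (rule det_cong) simp
  show ?thesis unfolding a b c by (rule det_multi) simp
qed

lemma det_onerow:
  fixes C :: "'a::comm_ring_1 ^ 'n::finite ^ 'n"
  shows "det (\<chi> i. if i = k then (\<chi> j. 1) else - (C $ i)) =
    (\<Sum>\<sigma>\<in>{\<sigma>. \<sigma> permutes (UNIV::'n set)}. of_int (sign \<sigma>) *
        ((-1) ^ (CARD('n) - 1) * (\<Prod>i\<in>- {k}. C $ i $ \<sigma> i)))"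
  unfolding det_def
proof (rule sum.cong[OF refl])
  fix \<sigma> :: "'n \<Rightarrow> 'n"
  have U: "(UNIV::'n set) = insert k (- {k})" by auto
  have "(\<Prod>i\<in>UNIV. (\<chi> i. if i = k then (\<chi> j. 1) else - (C $ i)) $ i $ \<sigma> i) =
        (\<Prod>i\<in>UNIV. if i = k then 1 else - (C $ i $ \<sigma> i))"
    by (rule prod.cong) auto
  also have "\<dots> = (\<Prod>i\<in>- {k}. - (C $ i $ \<sigma> i))"
    by (subst U, subst prod.insert) (auto intro: prod.cong)
  also have "\<dots> = (-1) ^ (CARD('n) - 1) * (\<Prod>i\<in>- {k}. C $ i $ \<sigma> i)"
  proof -
    have cc: "card (- {k} :: 'n set) = CARD('n) - 1"
      using card_Diff_singleton[of k UNIV] by (simp add: Compl_eq_Diff_UNIV)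
    show ?thesis by (simp add: prod_uminus cc)
  qed
  finally show "of_int (sign \<sigma>) * (\<Prod>i\<in>UNIV. (\<chi> i. if i = k then (\<chi> j. 1) else - (C $ i)) $ i $ \<sigma> i) =
        of_int (sign \<sigma>) * ((-1) ^ (CARD('n) - 1) * (\<Prod>i\<in>- {k}. C $ i $ \<sigma> i))" by simp
qed

lemma neg1_sq: "((-1::'a::comm_ring_1) ^ m) * (-1) ^ m = 1"
  by (induct m) auto

lemma sign_term:
  assumes sp: "\<sigma> permutes (UNIV::'n::finite set)"
  shows "(-1::'a::comm_ring_1) ^ num_cycles (Phi k \<sigma>) = of_int (sign \<sigma>) * (-1) ^ (CARD('n) - 1)"
proof -
  define c where "c = card (range (orb \<sigma>))"
  have nc: "num_cycles (Phi k \<sigma>) + 1 = c" using Phi_in(2)[OF sp] unfolding c_def .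
  have sg: "sign \<sigma> = (-1) ^ (CARD('n) - c)" using sign_orb[OF finU sp] unfolding c_def .
  have cle: "c \<le> CARD('n)" unfolding c_def by (rule card_image_le[OF finU])
  have N: "CARD('n) - 1 = (CARD('n) - c) + num_cycles (Phi k \<sigma>)" using nc cle by simp
  have "(of_int (sign \<sigma>) :: 'a) * (-1) ^ (CARD('n) - 1) =
      ((-1) ^ (CARD('n) - c) * (-1) ^ (CARD('n) - c)) * (-1) ^ num_cycles (Phi k \<sigma>)"
    unfolding sg N by (simp add: power_add mult.assoc)
  also have "\<dots> = (-1) ^ num_cycles (Phi k \<sigma>)" by (simp only: neg1_sq mult_1)
  finally show ?thesis by simp
qed

lemma prod_term:
  "(\<Prod>(i, j) \<in> Phi k \<sigma>. C $ i $ j) = (\<Prod>i\<in>- {k}. C $ i $ \<sigma> i)"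
proof -
  have "inj_on (\<lambda>i. (i, \<sigma> i)) (- {k})" by (auto simp: inj_on_def)
  then show ?thesis unfolding Phi_def by (simp add: prod.reindex)
qed

theorem corollaryA5:
  fixes C :: "'a::comm_ring_1 ^ 'n ^ 'n"
  shows "det ((\<chi> i j. 1) - C) =
    det (- C) + (\<Sum>G \<in> (path_cycle_graphs :: ('n \<times> 'n) set set).
       (-1) ^ num_cycles G * (\<Prod>(i, j) \<in> G. C $ i $ j))"
proof -
  define u :: "'a^'n" where "u = (\<chi> j. 1)"
  define v :: "'n \<Rightarrow> 'a^'n" where "v i = - (C $ i)" for i
  define P where "P = {\<sigma>::'n\<Rightarrow>'n. \<sigma> permutes UNIV}"
  define F where "F k \<sigma> = of_int (sign \<sigma>) * ((-1::'a) ^ (CARD('n) - 1) * (\<Prod>i\<in>- {k}. C $ i $ \<sigma> i))"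
    for k and \<sigma> :: "'n \<Rightarrow> 'n"
  define h where "h G = (-1::'a) ^ num_cycles G * (\<Prod>(i, j) \<in> G. C $ i $ j)" for G :: "('n \<times> 'n) set"
  have e1: "(\<chi> i j. 1) - C = (\<chi> i. u + v i)" by (simp add: vec_eq_iff u_def v_def)
  have e2: "- C = (\<chi> i. v i)" by (simp add: vec_eq_iff v_def)
  have "det ((\<chi> i j. 1) - C) = det (- C) + (\<Sum>k\<in>UNIV. det (\<chi> i. if i = k then u else v i))"
    unfolding e1 e2 by (rule det_rank1)
  also have "(\<Sum>k\<in>UNIV. det (\<chi> i. if i = k then u else v i)) = (\<Sum>k\<in>UNIV. \<Sum>\<sigma>\<in>P. F k \<sigma>)"
    unfolding u_def v_def F_def P_def by (rule sum.cong[OF refl]) (rule det_onerow)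
  also have "\<dots> = (\<Sum>(k, \<sigma>)\<in>(UNIV::'n set) \<times> P. F k \<sigma>)" by (rule sum.cartesian_product)
  also have "\<dots> = (\<Sum>G \<in> (path_cycle_graphs :: ('n \<times> 'n) set set). h G)"
  proof -
    let ?g = "(\<lambda>(k, \<sigma>). Phi k \<sigma>) :: 'n \<times> ('n \<Rightarrow> 'n) \<Rightarrow> ('n \<times> 'n) set"
    have img: "(path_cycle_graphs :: ('n \<times> 'n) set set) = ?g ` ((UNIV::'n set) \<times> P)"
    proof
      show "path_cycle_graphs \<subseteq> ?g ` ((UNIV::'n set) \<times> P)"
      proof
        fix G :: "('n \<times> 'n) set" assume "G \<in> path_cycle_graphs"
        then obtain k \<sigma> where "\<sigma> permutes UNIV" "G = Phi k \<sigma>" using Phi_surj by blast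
        then show "G \<in> ?g ` ((UNIV::'n set) \<times> P)" unfolding P_def by force
      qed
      show "?g ` ((UNIV::'n set) \<times> P) \<subseteq> path_cycle_graphs"
        using Phi_in(1) unfolding P_def by auto
    qed
    have inj: "inj_on ?g ((UNIV::'n set) \<times> P)"
    proof (rule inj_onI)
      fix x y assume xs: "x \<in> (UNIV::'n set) \<times> P" and ys: "y \<in> (UNIV::'n set) \<times> P" and eq: "?g x = ?g y"
      obtain k \<sigma> where x: "x = (k, \<sigma>)" by (cases x)
      obtain k' \<sigma>' where y: "y = (k', \<sigma>')" by (cases y)
      have s1: "\<sigma> permutes UNIV" using xs x unfolding P_def by simp
      have s2: "\<sigma>' permutes UNIV" using ys y unfolding P_def by simp
      have "Phi k \<sigma> = Phi k' \<sigma>'" using eq x y by simp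
      then have "k = k' \<and> \<sigma> = \<sigma>'" by (rule Phi_inj[OF s1 s2])
      then show "x = y" using x y by simp
    qed
    have "(\<Sum>G \<in> (path_cycle_graphs :: ('n \<times> 'n) set set). h G) = (\<Sum>x\<in>(UNIV::'n set) \<times> P. h (?g x))"
      unfolding img by (simp add: sum.reindex[OF inj])
    also have "\<dots> = (\<Sum>(k, \<sigma>)\<in>(UNIV::'n set) \<times> P. F k \<sigma>)"
    proof (rule sum.cong[OF refl])
      fix x assume "x \<in> (UNIV::'n set) \<times> P"
      then obtain k \<sigma> where x: "x = (k, \<sigma>)" and sp: "\<sigma> permutes UNIV" unfolding P_def by auto
      have "h (?g x) = (-1) ^ num_cycles (Phi k \<sigma>) * (\<Prod>i\<in>- {k}. C $ i $ \<sigma> i)"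
        unfolding h_def x by (simp add: prod_term)
      also have "\<dots> = F k \<sigma>" unfolding F_def sign_term[OF sp] by (simp add: mult.assoc)
      finally show "h (?g x) = (case x of (k, \<sigma>) \<Rightarrow> F k \<sigma>)" using x by simp
    qed
    finally show ?thesis by simp
  qed
  finally show ?thesis unfolding h_def by simp
qed

end
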